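(* If $G$ is a $K_3$-free graph, then $KB(G)=(KB_m(G))^2$ (as graphs on the common vertex set consisting of the bicliques of $G$).
   Context: All graphs are finite and simple. A biclique of a graph $G$ is a set $P\subseteq V(G)$ such that the induced subgraph $G[P]$ is a complete bipartite graph with both parts nonempty, and $P$ is inclusion-maximal with this property. Since $G[P]$ is connected, its bipartition into two nonempty independent sets $X,Y$ (every vertex of $X$ adjacent to every vertex of $Y$) is unique; we write $P=XY$ to mean $P=X\cup Y$ with $X,Y$ these two parts, called the sides of $P$. Two bicliques $P,Q$ of $G$ are mutually included if their sides can be named $P=X_PY_P$, $Q=X_QY_Q$ so that $X_Q\subsetneq X_P$ and $Y_P\subsetneq Y_Q$. The biclique graph $KB(G)$ has the set of bicliques of $G$ as vertex set, two distinct bicliques being adjacent iff they intersect. The mutually included biclique graph $KB_m(G)$ has the same vertex set, two distinct bicliques being adjacent iff they are mutually included. For a graph $H$, the square $H^2$ has vertex set $V(H)$, two distinct vertices being adjacent iff their distance in $H$ is at most $2$. *)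

theory Defs
  imports Main
begin

definition simple_graph :: "'a set \<Rightarrow> ('a \<Rightarrow> 'a \<Rightarrow> bool) \<Rightarrow> bool" where
  "simple_graph V E \<longleftrightarrow> finite V \<and> (\<forall>x y. E x y \<longrightarrow> x \<in> V \<and> y \<in> V)
     \<and> (\<forall>x y. E x y \<longrightarrow> E y x) \<and> (\<forall>x. \<not> E x x)"

definition triangle_free :: "'a set \<Rightarrow> ('a \<Rightarrow> 'a \<Rightarrow> bool) \<Rightarrow> bool" where
  "triangle_free V E \<longleftrightarrow> \<not> (\<exists>x\<in>V. \<exists>y\<in>V. \<exists>z\<in>V. E x y \<and> E y z \<and> E x z)"

definition independent :: "('a \<Rightarrow> 'a \<Rightarrow> bool) \<Rightarrow> 'a set \<Rightarrow> bool" where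
  "independent E S \<longleftrightarrow> (\<forall>x\<in>S. \<forall>y\<in>S. \<not> E x y)"

definition biclique_sides :: "'a set \<Rightarrow> ('a \<Rightarrow> 'a \<Rightarrow> bool) \<Rightarrow> 'a set \<Rightarrow> 'a set \<Rightarrow> bool" where
  "biclique_sides V E X Y \<longleftrightarrow> X \<subseteq> V \<and> Y \<subseteq> V \<and> X \<noteq> {} \<and> Y \<noteq> {} \<and> X \<inter> Y = {}
     \<and> independent E X \<and> independent E Y \<and> (\<forall>x\<in>X. \<forall>y\<in>Y. E x y)"

definition induces_complete_bipartite :: "'a set \<Rightarrow> ('a \<Rightarrow> 'a \<Rightarrow> bool) \<Rightarrow> 'a set \<Rightarrow> bool" where
  "induces_complete_bipartite V E P \<longleftrightarrow> (\<exists>X Y. P = X \<union> Y \<and> biclique_sides V E X Y)"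

definition is_biclique :: "'a set \<Rightarrow> ('a \<Rightarrow> 'a \<Rightarrow> bool) \<Rightarrow> 'a set \<Rightarrow> bool" where
  "is_biclique V E P \<longleftrightarrow> induces_complete_bipartite V E P
     \<and> (\<forall>Q. P \<subseteq> Q \<and> induces_complete_bipartite V E Q \<longrightarrow> Q = P)"

definition bicliques :: "'a set \<Rightarrow> ('a \<Rightarrow> 'a \<Rightarrow> bool) \<Rightarrow> 'a set set" where
  "bicliques V E = {P. is_biclique V E P}"

definition mutually_included :: "'a set \<Rightarrow> ('a \<Rightarrow> 'a \<Rightarrow> bool) \<Rightarrow> 'a set \<Rightarrow> 'a set \<Rightarrow> bool" where
  "mutually_included V E P Q \<longleftrightarrow> (\<exists>XP YP XQ YQ.
      P = XP \<union> YP \<and> biclique_sides V E XP YP \<and>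
      Q = XQ \<union> YQ \<and> biclique_sides V E XQ YQ \<and> XQ \<subset> XP \<and> YP \<subset> YQ)"

definition KB_adj :: "'a set \<Rightarrow> ('a \<Rightarrow> 'a \<Rightarrow> bool) \<Rightarrow> 'a set \<Rightarrow> 'a set \<Rightarrow> bool" where
  "KB_adj V E P Q \<longleftrightarrow> P \<in> bicliques V E \<and> Q \<in> bicliques V E \<and> P \<noteq> Q \<and> P \<inter> Q \<noteq> {}"

definition KBm_adj :: "'a set \<Rightarrow> ('a \<Rightarrow> 'a \<Rightarrow> bool) \<Rightarrow> 'a set \<Rightarrow> 'a set \<Rightarrow> bool" where
  "KBm_adj V E P Q \<longleftrightarrow> P \<in> bicliques V E \<and> Q \<in> bicliques V E \<and> P \<noteq> Q
     \<and> mutually_included V E P Q"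

definition square_adj :: "'b set \<Rightarrow> ('b \<Rightarrow> 'b \<Rightarrow> bool) \<Rightarrow> 'b \<Rightarrow> 'b \<Rightarrow> bool" where
  "square_adj W A u v \<longleftrightarrow> u \<in> W \<and> v \<in> W \<and> u \<noteq> v \<and> (A u v \<or> (\<exists>w\<in>W. A u w \<and> A w v))"

end

theory Submission
  imports Defs
begin

definition CN :: "'a set \<Rightarrow> ('a \<Rightarrow> 'a \<Rightarrow> bool) \<Rightarrow> 'a set \<Rightarrow> 'a set" where
  "CN V E S = {v\<in>V. \<forall>s\<in>S. E v s}"

lemma sides_sym:
  assumes "simple_graph V E" "biclique_sides V E X Y" shows "biclique_sides V E Y X"
  using assms unfolding biclique_sides_def simple_graph_def by blast

lemma CN_anti: "S \<subseteq> T \<Longrightarrow> CN V E T \<subseteq> CN V E S"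
  unfolding CN_def by blast

lemma CN_Un: "CN V E (A \<union> B) = CN V E A \<inter> CN V E B"
  unfolding CN_def by blast

lemma CN_CN: "simple_graph V E \<Longrightarrow> S \<subseteq> V \<Longrightarrow> S \<subseteq> CN V E (CN V E S)"
  unfolding CN_def simple_graph_def by blast

lemma max_side:
  assumes sg: "simple_graph V E" and tf: "triangle_free V E"
    and bc: "is_biclique V E (X \<union> Y)" and s: "biclique_sides V E X Y"
  shows "X = CN V E Y"
proof
  show "X \<subseteq> CN V E Y" using s unfolding biclique_sides_def CN_def by blast
next
  show "CN V E Y \<subseteq> X"
  proof
    fix v assume v: "v \<in> CN V E Y"
    show "v \<in> X"
    proof (rule ccontr)
      assume nv: "v \<notin> X"
      have vY: "v \<notin> Y" using v sg unfolding CN_def simple_graph_def by blast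
      have indX: "independent E (insert v X)"
        unfolding independent_def
      proof (intro ballI notI)
        fix a b assume a: "a \<in> insert v X" and b: "b \<in> insert v X" and e: "E a b"
        obtain y where y: "y \<in> Y" using s unfolding biclique_sides_def by blast
        have ay: "E a y" "E b y" using a b y v s unfolding CN_def biclique_sides_def by auto
        have "a \<in> V" "b \<in> V" "y \<in> V" using sg e ay unfolding simple_graph_def by auto
        thus False using tf e ay sg unfolding triangle_free_def simple_graph_def by blast
      qed
      have "biclique_sides V E (insert v X) Y"
        using s v vY indX unfolding biclique_sides_def CN_def by auto
      hence "induces_complete_bipartite V E (insert v X \<union> Y)"
        unfolding induces_complete_bipartite_def by blast
      moreover have "X \<union> Y \<subseteq> insert v X \<union> Y" by blast
      ultimately have "insert v X \<union> Y = X \<union> Y" using bc unfolding is_biclique_def by blast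
      thus False using nv vY by blast
    qed
  qed
qed

lemma max_sides:
  assumes sg: "simple_graph V E" and tf: "triangle_free V E"
    and bc: "is_biclique V E (X \<union> Y)" and s: "biclique_sides V E X Y"
  shows "X = CN V E Y \<and> Y = CN V E X"
proof -
  have "is_biclique V E (Y \<union> X)" using bc by (simp add: Un_commute)
  thus ?thesis using max_side[OF sg tf bc s] max_side[OF sg tf _ sides_sym[OF sg s]] by blast
qed

lemma mk_biclique:
  assumes sg: "simple_graph V E" and tf: "triangle_free V E"
    and ne: "X \<noteq> {}" "Y \<noteq> {}" and cx: "X = CN V E Y" and cy: "Y = CN V E X"
  shows "is_biclique V E (X \<union> Y) \<and> biclique_sides V E X Y"
proof -
  have s: "biclique_sides V E X Y"
    unfolding biclique_sides_def independent_def
  proof (intro conjI)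
    show "X \<subseteq> V" "Y \<subseteq> V" using cx cy unfolding CN_def by auto
    show "X \<noteq> {}" "Y \<noteq> {}" by fact+
    show "X \<inter> Y = {}" using cx sg unfolding CN_def simple_graph_def by blast
    show "\<forall>x\<in>X. \<forall>y\<in>Y. E x y" using cx cy sg unfolding CN_def simple_graph_def by blast
    show "\<forall>x\<in>X. \<forall>y\<in>X. \<not> E x y"
    proof (intro ballI notI)
      fix x y assume "x \<in> X" "y \<in> X" "E x y"
      obtain z where "z \<in> Y" using ne by blast
      thus False using tf \<open>x \<in> X\<close> \<open>y \<in> X\<close> \<open>E x y\<close> cx cy
        unfolding triangle_free_def CN_def by blast
    qed
    show "\<forall>x\<in>Y. \<forall>y\<in>Y. \<not> E x y"
    proof (intro ballI notI)
      fix x y assume "x \<in> Y" "y \<in> Y" "E x y"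
      obtain z where "z \<in> X" using ne by blast
      thus False using tf \<open>x \<in> Y\<close> \<open>y \<in> Y\<close> \<open>E x y\<close> cx cy
        unfolding triangle_free_def CN_def by blast
    qed
  qed
  have "\<forall>Q. X \<union> Y \<subseteq> Q \<and> induces_complete_bipartite V E Q \<longrightarrow> Q = X \<union> Y"
  proof (intro allI impI)
    fix Q assume h: "X \<union> Y \<subseteq> Q \<and> induces_complete_bipartite V E Q"
    then obtain A B where Q: "Q = A \<union> B" and ab: "biclique_sides V E A B"
      unfolding induces_complete_bipartite_def by blast
    have key: "\<And>A B. biclique_sides V E A B \<Longrightarrow> X \<union> Y \<subseteq> A \<union> B \<Longrightarrow> X \<inter> A \<noteq> {} \<Longrightarrow> A \<union> B = X \<union> Y"
    proof -
      fix A B assume ab: "biclique_sides V E A B" and sub: "X \<union> Y \<subseteq> A \<union> B" and i: "X \<inter> A \<noteq> {}"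
      then obtain x where x: "x \<in> X" "x \<in> A" by blast
      have YB: "Y \<subseteq> B"
      proof
        fix y assume "y \<in> Y"
        hence "E x y" using s x unfolding biclique_sides_def by blast
        thus "y \<in> B" using ab x sub \<open>y \<in> Y\<close> unfolding biclique_sides_def independent_def by blast
      qed
      have XA: "X \<subseteq> A"
      proof
        fix x' assume "x' \<in> X"
        obtain y where "y \<in> Y" using ne by blast
        hence "E x' y" using s \<open>x' \<in> X\<close> unfolding biclique_sides_def by blast
        thus "x' \<in> A" using ab YB \<open>y \<in> Y\<close> sub \<open>x' \<in> X\<close> unfolding biclique_sides_def independent_def by blast
      qed
      have "A \<subseteq> CN V E B" using ab unfolding biclique_sides_def CN_def by blast
      also have "\<dots> \<subseteq> CN V E Y" using CN_anti[OF YB] .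
      finally have "A \<subseteq> X" using cx by simp
      have "B \<subseteq> CN V E A" using ab sg unfolding biclique_sides_def CN_def simple_graph_def by blast
      also have "\<dots> \<subseteq> CN V E X" using CN_anti[OF XA] .
      finally have "B \<subseteq> Y" using cy by simp
      show "A \<union> B = X \<union> Y" using XA YB \<open>A \<subseteq> X\<close> \<open>B \<subseteq> Y\<close> by blast
    qed
    obtain x where "x \<in> X" using ne by blast
    hence "x \<in> A \<or> x \<in> B" using h Q by blast
    thus "Q = X \<union> Y"
    proof
      assume "x \<in> A" thus ?thesis using key[OF ab] h Q \<open>x \<in> X\<close> by blast
    next
      assume "x \<in> B" thus ?thesis using key[OF sides_sym[OF sg ab]] h Q \<open>x \<in> X\<close> by blast
    qed
  qed
  moreover have "induces_complete_bipartite V E (X \<union> Y)"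
    using s unfolding induces_complete_bipartite_def by blast
  ultimately show ?thesis using s unfolding is_biclique_def by blast
qed

lemma mi_sym:
  assumes sg: "simple_graph V E" and "mutually_included V E P Q"
  shows "mutually_included V E Q P"
proof -
  obtain XP YP XQ YQ where h: "P = XP \<union> YP" "biclique_sides V E XP YP"
    "Q = XQ \<union> YQ" "biclique_sides V E XQ YQ" "XQ \<subset> XP" "YP \<subset> YQ"
    using assms(2) unfolding mutually_included_def by blast
  show ?thesis unfolding mutually_included_def
  proof (intro exI conjI)
    show "Q = YQ \<union> XQ" "P = YP \<union> XP" using h(1,3) by (simp_all add: Un_commute)
    show "biclique_sides V E YQ XQ" "biclique_sides V E YP XP" using h(2,4) sides_sym[OF sg] by auto
    show "YP \<subset> YQ" "XQ \<subset> XP" by (fact h(6), fact h(5))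
  qed
qed

lemma KBm_sym:
  assumes sg: "simple_graph V E"
  shows "KBm_adj V E P Q = KBm_adj V E Q P"
  using mi_sym[OF sg] unfolding KBm_adj_def by blast

lemma biclique_sides_ex:
  assumes "P \<in> bicliques V E"
  shows "\<exists>X Y. P = X \<union> Y \<and> biclique_sides V E X Y"
  using assms unfolding bicliques_def is_biclique_def induces_complete_bipartite_def by blast

lemma mi_int:
  assumes "mutually_included V E P Q" shows "P \<inter> Q \<noteq> {}"
proof -
  obtain XP YP XQ YQ where h: "P = XP \<union> YP" "Q = XQ \<union> YQ" "biclique_sides V E XQ YQ" "XQ \<subset> XP"
    using assms unfolding mutually_included_def by blast
  obtain x where "x \<in> XQ" using h(3) unfolding biclique_sides_def by blast
  thus ?thesis using h by blast
qed

lemma sides_half: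
  assumes "biclique_sides V E X Y" "biclique_sides V E A B" "X \<union> Y = A \<union> B" "x \<in> X" "x \<in> A"
  shows "X = A \<and> Y = B"
proof -
  have cXY: "\<forall>x\<in>X. \<forall>y\<in>Y. E x y" and iA: "\<forall>a\<in>A. \<forall>b\<in>A. \<not> E a b"
    and iB: "\<forall>a\<in>B. \<forall>b\<in>B. \<not> E a b" and d2: "A \<inter> B = {}" and neY: "Y \<noteq> {}"
    using assms(1,2) unfolding biclique_sides_def independent_def by auto
  have YB: "Y \<subseteq> B"
  proof
    fix y assume y: "y \<in> Y"
    hence e: "E x y" using cXY assms(4) by blast
    have "y \<in> A \<or> y \<in> B" using y assms(3) by blast
    thus "y \<in> B" using iA e assms(5) by blast
  qed
  obtain y0 where y0: "y0 \<in> Y" using neY by blast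
  have XA: "X \<subseteq> A"
  proof
    fix x' assume x': "x' \<in> X"
    hence e: "E x' y0" using cXY y0 by blast
    have "x' \<in> A \<or> x' \<in> B" using x' assms(3) by blast
    thus "x' \<in> A" using iB e YB y0 by blast
  qed
  have "A \<subseteq> X"
  proof
    fix a assume "a \<in> A"
    hence "a \<in> X \<or> a \<in> Y" using assms(3) by blast
    thus "a \<in> X" using YB d2 \<open>a \<in> A\<close> by blast
  qed
  moreover have "B \<subseteq> Y"
  proof
    fix a assume "a \<in> B"
    hence "a \<in> X \<or> a \<in> Y" using assms(3) by blast
    thus "a \<in> Y" using XA d2 \<open>a \<in> B\<close> by blast
  qed
  ultimately show ?thesis using XA YB by blast
qed

lemma sides_of_biclique:
  assumes sg: "simple_graph V E" and "biclique_sides V E X Y" "P = X \<union> Y" "biclique_sides V E A B" "P = A \<union> B"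
  shows "(X = A \<and> Y = B) \<or> (X = B \<and> Y = A)"
proof -
  obtain x where x: "x \<in> X" using assms(2) unfolding biclique_sides_def by blast
  have u: "X \<union> Y = A \<union> B" using assms(3,5) by simp
  hence u2: "X \<union> Y = B \<union> A" by (simp add: Un_commute)
  have "x \<in> A \<or> x \<in> B" using x u by blast
  thus ?thesis
  proof
    assume "x \<in> A" thus ?thesis using sides_half[OF assms(2) assms(4) u x] by blast
  next
    assume "x \<in> B" thus ?thesis using sides_half[OF assms(2) sides_sym[OF sg assms(4)] u2 x] by blast
  qed
qed

lemma square_to_int:
  assumes sg: "simple_graph V E" and m1: "mutually_included V E P R" and m2: "mutually_included V E R Q"
  shows "P \<inter> Q \<noteq> {}"
proof -
  obtain XP YP XR YR where h: "P = XP \<union> YP" "biclique_sides V E XP YP"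
    "R = XR \<union> YR" "biclique_sides V E XR YR" "XR \<subset> XP" "YP \<subset> YR"
    using m1 unfolding mutually_included_def by blast
  obtain XR' YR' XQ YQ where g: "R = XR' \<union> YR'" "biclique_sides V E XR' YR'"
    "Q = XQ \<union> YQ" "biclique_sides V E XQ YQ" "XQ \<subset> XR'" "YR' \<subset> YQ"
    using m2 unfolding mutually_included_def by blast
  have ne: "XR \<noteq> {}" "YR \<noteq> {}" using h(4) unfolding biclique_sides_def by auto
  have "(XR = XR' \<and> YR = YR') \<or> (XR = YR' \<and> YR = XR')"
    using sides_of_biclique[OF sg h(4) h(3) g(2) g(1)] by blast
  thus ?thesis
  proof (elim disjE conjE)
    assume "XR = XR'" "YR = YR'"
    hence "YP \<subseteq> Q" using h(6) g(3,6) by blast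
    moreover have "YP \<subseteq> P" using h(1) by blast
    moreover have "YP \<noteq> {}" using h(2) unfolding biclique_sides_def by blast
    ultimately show ?thesis by blast
  next
    assume "XR = YR'" "YR = XR'"
    hence "XR \<subseteq> Q" using g(3,6) by blast
    moreover have "XR \<subseteq> P" using h(1,5) by blast
    ultimately show ?thesis using ne by blast
  qed
qed

lemma main_dir:
  assumes sg: "simple_graph V E" and tf: "triangle_free V E"
    and P: "P = XP \<union> YP" "biclique_sides V E XP YP" "is_biclique V E P"
    and Q: "Q = XQ \<union> YQ" "biclique_sides V E XQ YQ" "is_biclique V E Q"
    and v: "v \<in> XP" "v \<in> XQ" and ne: "P \<noteq> Q"
  shows "square_adj (bicliques V E) (KBm_adj V E) P Q"
proof -
  have mp: "XP = CN V E YP \<and> YP = CN V E XP" using max_sides[OF sg tf _ P(2)] P by blast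
  have mq: "XQ = CN V E YQ \<and> YQ = CN V E XQ" using max_sides[OF sg tf _ Q(2)] Q by blast
  define XR where "XR = XP \<inter> XQ"
  define YR where "YR = CN V E XR"
  have XRe: "XR = CN V E (YP \<union> YQ)" unfolding CN_Un XR_def using conjunct1[OF mp] conjunct1[OF mq] by metis
  have YPR: "YP \<subseteq> YR" unfolding YR_def XR_def using mp CN_anti[of "XP \<inter> XQ" XP V E] by blast
  have YQR: "YQ \<subseteq> YR" unfolding YR_def XR_def using mq CN_anti[of "XP \<inter> XQ" XQ V E] by blast
  have XRc: "XR = CN V E YR"
  proof
    have "XR \<subseteq> V" unfolding XR_def using P(2) unfolding biclique_sides_def by blast
    thus "XR \<subseteq> CN V E YR" unfolding YR_def using CN_CN[OF sg] by blast
    show "CN V E YR \<subseteq> XR" using XRe CN_anti[of "YP \<union> YQ" YR V E] YPR YQR by blast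
  qed
  have neX: "XR \<noteq> {}" using v XR_def by blast
  have neY: "YR \<noteq> {}" using YPR P(2) unfolding biclique_sides_def by blast
  obtain R: "is_biclique V E (XR \<union> YR)" "biclique_sides V E XR YR"
    using mk_biclique[OF sg tf neX neY XRc YR_def] by blast
  have PR: "XR \<union> YR = P \<or> mutually_included V E P (XR \<union> YR)"
  proof (cases "XR = XP")
    case True
    hence "YR = YP" using conjunct2[OF mp] YR_def by metis
    thus ?thesis using True P by blast
  next
    case False
    hence s1: "XR \<subset> XP" unfolding XR_def by blast
    have "YP \<noteq> YR"
    proof
      assume "YP = YR"
      hence "XP = XR" using conjunct1[OF mp] XRc by metis
      thus False using s1 by blast
    qed
    hence "YP \<subset> YR" using YPR by blast
    thus ?thesis using s1 P R unfolding mutually_included_def by blast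
  qed
  have QR: "XR \<union> YR = Q \<or> mutually_included V E Q (XR \<union> YR)"
  proof (cases "XR = XQ")
    case True
    hence "YR = YQ" using conjunct2[OF mq] YR_def by metis
    thus ?thesis using True Q by blast
  next
    case False
    hence s1: "XR \<subset> XQ" unfolding XR_def by blast
    have "YQ \<noteq> YR"
    proof
      assume "YQ = YR"
      hence "XQ = XR" using conjunct1[OF mq] XRc by metis
      thus False using s1 by blast
    qed
    hence "YQ \<subset> YR" using YQR by blast
    thus ?thesis using s1 Q R unfolding mutually_included_def by blast
  qed
  have PB: "P \<in> bicliques V E" "Q \<in> bicliques V E" "XR \<union> YR \<in> bicliques V E"
    using P Q R unfolding bicliques_def by auto
  show ?thesis unfolding square_adj_def
  proof (intro conjI PB ne)
    show "KBm_adj V E P Q \<or> (\<exists>w\<in>bicliques V E. KBm_adj V E P w \<and> KBm_adj V E w Q)"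
    proof (cases "XR \<union> YR = P")
      case True
      hence "mutually_included V E Q P" using QR ne by auto
      hence "mutually_included V E P Q" using mi_sym[OF sg] by blast
      thus ?thesis using PB ne unfolding KBm_adj_def by blast
    next
      case F1: False
      show ?thesis
      proof (cases "XR \<union> YR = Q")
        case True
        thus ?thesis using PR F1 PB ne unfolding KBm_adj_def by auto
      next
        case False
        have "KBm_adj V E P (XR \<union> YR)" using PR F1 PB unfolding KBm_adj_def by auto
        moreover have "KBm_adj V E (XR \<union> YR) Q"
          using QR False PB mi_sym[OF sg] unfolding KBm_adj_def by auto
        ultimately show ?thesis using PB by blast
      qed
    qed
  qed
qed

theorem theorem1:
  fixes V :: "'a set" and E :: "'a \<Rightarrow> 'a \<Rightarrow> bool"
  assumes "simple_graph V E" and "triangle_free V E"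
  shows "KB_adj V E = square_adj (bicliques V E) (KBm_adj V E)"
proof (intro ext iffI)
  fix P Q assume k: "KB_adj V E P Q"
  hence PB: "P \<in> bicliques V E" "Q \<in> bicliques V E" "P \<noteq> Q" "P \<inter> Q \<noteq> {}"
    unfolding KB_adj_def by auto
  obtain A B where P: "P = A \<union> B" "biclique_sides V E A B" using biclique_sides_ex[OF PB(1)] by blast
  obtain C D where Q: "Q = C \<union> D" "biclique_sides V E C D" using biclique_sides_ex[OF PB(2)] by blast
  obtain v where v: "v \<in> P" "v \<in> Q" using PB by blast
  have ip: "is_biclique V E P" "is_biclique V E Q" using PB unfolding bicliques_def by auto
  have sA: "biclique_sides V E B A" "biclique_sides V E D C" using sides_sym[OF assms(1)] P Q by auto
  note md = main_dir[OF assms]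
  show "square_adj (bicliques V E) (KBm_adj V E) P Q"
  proof -
    consider "v \<in> A" "v \<in> C" | "v \<in> A" "v \<in> D" | "v \<in> B" "v \<in> C" | "v \<in> B" "v \<in> D"
      using v P Q by blast
    thus ?thesis
    proof cases
      case 1 thus ?thesis using md[OF P ip(1) Q ip(2) _ _ PB(3)] by blast
    next
      case 2
      have Q': "Q = D \<union> C" using Q by blast
      show ?thesis using md[OF P ip(1) Q' sA(2) ip(2) _ _ PB(3)] 2 by blast
    next
      case 3
      have P': "P = B \<union> A" using P by blast
      show ?thesis using md[OF P' sA(1) ip(1) Q ip(2) _ _ PB(3)] 3 by blast
    next
      case 4
      have Q': "Q = D \<union> C" using Q by blast
      have P': "P = B \<union> A" using P by blast
      show ?thesis using md[OF P' sA(1) ip(1) Q' sA(2) ip(2) _ _ PB(3)] 4 by blast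
    qed
  qed
next
  fix P Q assume s: "square_adj (bicliques V E) (KBm_adj V E) P Q"
  hence "P \<in> bicliques V E" "Q \<in> bicliques V E" "P \<noteq> Q" unfolding square_adj_def by auto
  moreover have "P \<inter> Q \<noteq> {}"
  proof -
    have "KBm_adj V E P Q \<or> (\<exists>w. KBm_adj V E P w \<and> KBm_adj V E w Q)"
      using s unfolding square_adj_def by blast
    thus ?thesis
    proof
      assume "KBm_adj V E P Q" thus ?thesis using mi_int unfolding KBm_adj_def by blast
    next
      assume "\<exists>w. KBm_adj V E P w \<and> KBm_adj V E w Q"
      then obtain w where "mutually_included V E P w" "mutually_included V E w Q"
        unfolding KBm_adj_def by blast
      thus ?thesis using square_to_int[OF assms(1)] by blast
    qed
  qed
  ultimately show "KB_adj V E P Q" unfolding KB_adj_def by blast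
qed

end
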